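(* Let $\mathcal{A}$ be a finite set of positive integers, let $w \leqslant z$ be real numbers, and let $m_1, m_2, m_3, m_4$ be real numbers with $(m_1, m_2) \in \mathcal{U}$ and $(m_3, m_4) \in \mathcal{U}$. Writing $M^r_4 = \sum_{1 \leqslant i_1 < \cdots < i_r \leqslant 4} m_{i_1}\cdots m_{i_r}$ and $P = m_1m_2m_3m_4$, we have $$ S(\mathcal{A}, z) \leqslant S(\mathcal{A}, w) - \frac{M^3_4 - M^2_4 + M^1_4 - 1}{P} \sum_{w \leqslant p_1 < z} S(\mathcal{A}_{p_1}, w) + \frac{2(M^2_4 - 3M^1_4 + 7)}{P} \sum_{w \leqslant p_2 < p_1 < z} S(\mathcal{A}_{p_1p_2}, w) $$ $$ - \frac{6(M^1_4 - 6)}{P} \sum_{w \leqslant p_3 < p_2 < p_1 < z} S(\mathcal{A}_{p_1p_2p_3}, w) + \frac{24}{P} \sum_{w \leqslant p_4 < p_3 < p_2 < p_1 < z} S(\mathcal{A}_{p_1p_2p_3p_4}, w). $$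
   Context: Throughout, $p, p_1, p_2, \dots$ denote prime numbers. For a finite set $\mathcal{A}$ of positive integers and a positive integer $d$, $\mathcal{A}_d = \{a : ad \in \mathcal{A}\}$. For real $z$, $S(\mathcal{A}, z)$ denotes the number of $a \in \mathcal{A}$ having no prime factor less than $z$. Let $T = (0,1] \cup [2,3] \cup [4,5] \cup \cdots$, i.e. $T$ is the union of $(0,1]$ and the intervals $[k-1,k]$ over all odd integers $k \geqslant 3$, and let $\mathcal{U} = \{(x_1, x_2) : x_1, x_2 \in T,\ |x_1 - x_2| \leqslant 1\}$. *)

theory Defs
  imports "HOL-Computational_Algebra.Primes" Complex_Main
begin

definition Adiv :: "nat set \<Rightarrow> nat \<Rightarrow> nat set" where
  "Adiv A d = {a. a * d \<in> A}"

definition sieveS :: "nat set \<Rightarrow> real \<Rightarrow> nat" where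
  "sieveS A z = card {a \<in> A. \<forall>p. prime p \<and> p dvd a \<longrightarrow> \<not> (real p < z)}"

definition primes_in :: "real \<Rightarrow> real \<Rightarrow> nat set" where
  "primes_in w z = {p. prime p \<and> w \<le> real p \<and> real p < z}"

definition Tset :: "real set" where
  "Tset = {x. (0 < x \<and> x \<le> 1) \<or> (\<exists>k::nat. odd k \<and> 3 \<le> k \<and> real k - 1 \<le> x \<and> x \<le> real k)}"

definition Uset :: "(real \<times> real) set" where
  "Uset = {(x1, x2). x1 \<in> Tset \<and> x2 \<in> Tset \<and> \<bar>x1 - x2\<bar> \<le> 1}"

definition M1 :: "real \<Rightarrow> real \<Rightarrow> real \<Rightarrow> real \<Rightarrow> real" where
  "M1 a b c d = a + b + c + d"
definition M2 :: "real \<Rightarrow> real \<Rightarrow> real \<Rightarrow> real \<Rightarrow> real" where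
  "M2 a b c d = a*b + a*c + a*d + b*c + b*d + c*d"
definition M3 :: "real \<Rightarrow> real \<Rightarrow> real \<Rightarrow> real \<Rightarrow> real" where
  "M3 a b c d = a*b*c + a*b*d + a*c*d + b*c*d"

end

theory Submission
  imports Defs
begin

lemma hockey:
  fixes Q :: "nat set"
  assumes "finite Q"
  shows "(\<Sum>x\<in>Q. card {q\<in>Q. q < x} choose k) = card Q choose Suc k"
  using assms
proof (induction Q rule: finite_linorder_max_induct)
  case empty
  then show ?case by simp
next
  case (insert b A)
  have bn: "b \<notin> A" using insert by auto
  have e1: "\<And>x. x \<in> A \<Longrightarrow> {q\<in>insert b A. q < x} = {q\<in>A. q < x}"
    using insert by auto
  have e2: "{q\<in>insert b A. q < b} = A" using insert by auto
  have "(\<Sum>x\<in>insert b A. card {q\<in>insert b A. q < x} choose k)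
      = (card A choose k) + (\<Sum>x\<in>A. card {q\<in>insert b A. q < x} choose k)"
    using insert bn e2 by (simp add: sum.insert)
  also have "(\<Sum>x\<in>A. card {q\<in>insert b A. q < x} choose k) = (\<Sum>x\<in>A. card {q\<in>A. q < x} choose k)"
    using e1 by (intro sum.cong) auto
  finally show ?case using insert bn by simp
qed

lemma finite_primes_in: "finite (primes_in w z)"
proof -
  have "primes_in w z \<subseteq> {..nat \<lceil>z\<rceil>}"
  proof
    fix p assume "p \<in> primes_in w z"
    then have "real p < z" unfolding primes_in_def by auto
    then have "real p \<le> real (nat \<lceil>z\<rceil>)" by linarith
    then show "p \<in> {..nat \<lceil>z\<rceil>}" by simp
  qed
  then show ?thesis using finite_subset by blast
qed

definition Bc :: "real \<Rightarrow> real \<Rightarrow> nat \<Rightarrow> nat \<Rightarrow> nat" where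
  "Bc w z a x = card {q\<in>primes_in w z. q dvd a \<and> q < x}"

lemma lvl:
  assumes "real b \<le> z"
  shows "(\<Sum>p\<in>primes_in w (real b). of_bool (p dvd a) * real (Bc w z a p choose k))
       = real (Bc w z a b choose Suc k)"
proof -
  define Qb where "Qb = {q\<in>primes_in w z. q dvd a \<and> q < b}"
  have fin: "finite Qb" unfolding Qb_def using finite_primes_in by auto
  have s: "{p\<in>primes_in w (real b). p dvd a} = Qb"
    unfolding Qb_def primes_in_def using assms by auto
  have "(\<Sum>p\<in>primes_in w (real b). of_bool (p dvd a) * real (Bc w z a p choose k))
      = (\<Sum>p\<in>{p\<in>primes_in w (real b). p dvd a}. real (Bc w z a p choose k))"
    by (subst sum.inter_filter[OF finite_primes_in]) (intro sum.cong, auto)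
  also have "\<dots> = (\<Sum>p\<in>Qb. real (card {q\<in>Qb. q < p} choose k))"
    unfolding s
  proof (intro sum.cong refl)
    fix p assume "p \<in> Qb"
    then have "{q\<in>primes_in w z. q dvd a \<and> q < p} = {q\<in>Qb. q < p}"
      unfolding Qb_def by auto
    then show "real (Bc w z a p choose k) = real (card {q\<in>Qb. q < p} choose k)"
      unfolding Bc_def by simp
  qed
  also have "\<dots> = real (card Qb choose Suc k)"
    using hockey[OF fin, of k] by (metis of_nat_sum)
  finally show ?thesis unfolding Bc_def Qb_def by simp
qed

lemma lvl_top:
  shows "(\<Sum>p\<in>primes_in w z. of_bool (p dvd a) * real (Bc w z a p choose k))
       = real (card {q\<in>primes_in w z. q dvd a} choose Suc k)"
proof -
  define Qb where "Qb = {q\<in>primes_in w z. q dvd a}"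
  have fin: "finite Qb" unfolding Qb_def using finite_primes_in by auto
  have "(\<Sum>p\<in>primes_in w z. of_bool (p dvd a) * real (Bc w z a p choose k))
      = (\<Sum>p\<in>Qb. real (Bc w z a p choose k))"
    unfolding Qb_def by (subst sum.inter_filter[OF finite_primes_in]) (intro sum.cong, auto)
  also have "\<dots> = (\<Sum>p\<in>Qb. real (card {q\<in>Qb. q < p} choose k))"
  proof (intro sum.cong refl)
    fix p assume "p \<in> Qb"
    have "{q\<in>primes_in w z. q dvd a \<and> q < p} = {q\<in>Qb. q < p}"
      unfolding Qb_def by auto
    then show "real (Bc w z a p choose k) = real (card {q\<in>Qb. q < p} choose k)"
      unfolding Bc_def by simp
  qed
  also have "\<dots> = real (card Qb choose Suc k)"
    using hockey[OF fin, of k] by (metis of_nat_sum)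
  finally show ?thesis unfolding Qb_def by simp
qed


lemma dvd2: "coprime (x::nat) y \<Longrightarrow> x * y dvd a \<longleftrightarrow> x dvd a \<and> y dvd a"
  by (meson divides_mult dvd_mult_left dvd_mult_right)

lemma cop: "prime (p::nat) \<Longrightarrow> prime q \<Longrightarrow> q < p \<Longrightarrow> coprime p q"
  using primes_coprime by (metis less_irrefl)

lemma dvd_prod4:
  fixes p1 p2 p3 p4 :: nat
  assumes "prime p1" "prime p2" "prime p3" "prime p4" "p4 < p3" "p3 < p2" "p2 < p1"
  shows "p1*p2*p3*p4 dvd a \<longleftrightarrow> p1 dvd a \<and> p2 dvd a \<and> p3 dvd a \<and> p4 dvd a"
proof -
  have o: "p3 < p1" "p4 < p1" "p4 < p2" using assms by linarith+
  have c1: "coprime p1 p2" "coprime p1 p3" "coprime p1 p4" "coprime p2 p3" "coprime p2 p4" "coprime p3 p4"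
    using assms o by (simp_all add: cop)
  have "coprime (p1*p2*p3) p4" "coprime (p1*p2) p3" using c1 by simp_all
  then show ?thesis using dvd2[of "p1*p2*p3" p4 a] dvd2[of "p1*p2" p3 a] dvd2[of p1 p2 a] c1 by blast
qed

lemma dvd_prod3:
  fixes p1 p2 p3 :: nat
  assumes "prime p1" "prime p2" "prime p3" "p3 < p2" "p2 < p1"
  shows "p1*p2*p3 dvd a \<longleftrightarrow> p1 dvd a \<and> p2 dvd a \<and> p3 dvd a"
proof -
  have o: "p3 < p1" using assms by linarith
  have c1: "coprime p1 p2" "coprime p1 p3" "coprime p2 p3"
    using assms o by (simp_all add: cop)
  have "coprime (p1*p2) p3" using c1 by simp_all
  then show ?thesis using dvd2[of "p1*p2" p3 a] dvd2[of p1 p2 a] c1 by blast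
qed

lemma dvd_prod2:
  fixes p1 p2 :: nat
  assumes "prime p1" "prime p2" "p2 < p1"
  shows "p1*p2 dvd a \<longleftrightarrow> p1 dvd a \<and> p2 dvd a"
  using assms cop[of p1 p2] dvd2[of p1 p2 a] by blast

definition Rset :: "real \<Rightarrow> nat set \<Rightarrow> nat set" where
  "Rset w A = {a\<in>A. \<forall>p. prime p \<and> p dvd a \<longrightarrow> \<not> real p < w}"

lemma sieve_d:
  assumes fA: "finite A" and d0: "d > 0" and dp: "\<And>p. prime p \<Longrightarrow> p dvd d \<Longrightarrow> w \<le> real p"
  shows "real (sieveS (Adiv A d) w) = (\<Sum>a\<in>Rset w A. of_bool (d dvd a))"
proof -
  have bij: "bij_betw (\<lambda>x. x*d) {a \<in> Adiv A d. \<forall>p. prime p \<and> p dvd a \<longrightarrow> \<not> real p < w}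
      {a\<in>Rset w A. d dvd a}"
    unfolding bij_betw_def
  proof
    show "inj_on (\<lambda>x. x * d) {a \<in> Adiv A d. \<forall>p. prime p \<and> p dvd a \<longrightarrow> \<not> real p < w}"
      using d0 by (intro inj_onI) simp
    show "(\<lambda>x. x * d) ` {a \<in> Adiv A d. \<forall>p. prime p \<and> p dvd a \<longrightarrow> \<not> real p < w} = {a \<in> Rset w A. d dvd a}"
    proof
      show "(\<lambda>x. x * d) ` {a \<in> Adiv A d. \<forall>p. prime p \<and> p dvd a \<longrightarrow> \<not> real p < w} \<subseteq> {a \<in> Rset w A. d dvd a}"
      proof
        fix y assume "y \<in> (\<lambda>x. x * d) ` {a \<in> Adiv A d. \<forall>p. prime p \<and> p dvd a \<longrightarrow> \<not> real p < w}"
        then obtain x where y: "y = x * d" and x: "x \<in> Adiv A d" "\<forall>p. prime p \<and> p dvd x \<longrightarrow> \<not> real p < w"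
          by blast
        have "\<forall>p. prime p \<and> p dvd x * d \<longrightarrow> \<not> real p < w"
        proof (intro allI impI)
          fix p assume p: "prime p \<and> p dvd x * d"
          then have "p dvd x \<or> p dvd d" using prime_dvd_mult_iff by blast
          then show "\<not> real p < w" using p x(2) dp[of p] by fastforce
        qed
        then show "y \<in> {a \<in> Rset w A. d dvd a}" using x(1) y unfolding Rset_def Adiv_def by auto
      qed
      show "{a \<in> Rset w A. d dvd a} \<subseteq> (\<lambda>x. x * d) ` {a \<in> Adiv A d. \<forall>p. prime p \<and> p dvd a \<longrightarrow> \<not> real p < w}"
      proof
        fix a assume a: "a \<in> {a \<in> Rset w A. d dvd a}"
        then have ad: "a = (a div d) * d" by simp
        have "a \<in> A" using a unfolding Rset_def by auto
        then have "a div d \<in> Adiv A d" using ad unfolding Adiv_def by (metis mem_Collect_eq)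
        moreover have "\<forall>p. prime p \<and> p dvd a div d \<longrightarrow> \<not> real p < w"
        proof (intro allI impI)
          fix p assume "prime p \<and> p dvd a div d"
          then have "prime p \<and> p dvd a" using ad by (metis dvd_mult2)
          then show "\<not> real p < w" using a unfolding Rset_def by auto
        qed
        ultimately have "a div d \<in> {a \<in> Adiv A d. \<forall>p. prime p \<and> p dvd a \<longrightarrow> \<not> real p < w}"
          by blast
        then show "a \<in> (\<lambda>x. x * d) ` {a \<in> Adiv A d. \<forall>p. prime p \<and> p dvd a \<longrightarrow> \<not> real p < w}"
          by (rule image_eqI[where f="\<lambda>x. x * d", OF ad])
      qed
    qed
  qed
  have fR: "finite (Rset w A)" using fA unfolding Rset_def by auto
  have "sieveS (Adiv A d) w = card {a\<in>Rset w A. d dvd a}"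
    unfolding sieveS_def using bij_betw_same_card[OF bij] by simp
  also have "real \<dots> = (\<Sum>a\<in>{a\<in>Rset w A. d dvd a}. 1)" by simp
  also have "\<dots> = (\<Sum>a\<in>Rset w A. of_bool (d dvd a))"
    by (subst sum.inter_filter[OF fR]) (intro sum.cong, auto)
  finally show ?thesis .
qed


lemma in_lt: "p \<in> primes_in w x \<Longrightarrow> real p < x" unfolding primes_in_def by auto

lemma N1: fixes a :: nat and w z :: real shows "real b \<le> z \<Longrightarrow> (\<Sum>p\<in>primes_in w (real b). ((of_bool (p dvd a) :: real))) = real (Bc w z a b choose 1)"
  using lvl[where a=a and w=w and k=0 and z=z and b=b] by simp

lemma N2: fixes a :: nat and w z :: real shows "real b \<le> z \<Longrightarrow> (\<Sum>p\<in>primes_in w (real b). of_bool (p dvd a) *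
     (\<Sum>q\<in>primes_in w (real p). (of_bool (q dvd a) :: real))) = real (Bc w z a b choose 2)"
proof -
  assume b: "real b \<le> z"
  have "(\<Sum>p\<in>primes_in w (real b). of_bool (p dvd a) *
     (\<Sum>q\<in>primes_in w (real p). (of_bool (q dvd a) :: real)))
    = (\<Sum>p\<in>primes_in w (real b). of_bool (p dvd a) * real (Bc w z a p choose 1))"
    by (intro sum.cong refl arg_cong2[where f="(*)"]) (use b in_lt N1 in \<open>force intro: N1\<close>)
  also have "\<dots> = real (Bc w z a b choose 2)" using lvl[OF b, where a=a and w=w and k=1] by (simp add: numeral_2_eq_2)
  finally show ?thesis .
qed

lemma N3: fixes a :: nat and w z :: real shows "real b \<le> z \<Longrightarrow> (\<Sum>p\<in>primes_in w (real b). of_bool (p dvd a) *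
     (\<Sum>q\<in>primes_in w (real p). of_bool (q dvd a) *
     (\<Sum>r\<in>primes_in w (real q). (of_bool (r dvd a) :: real)))) = real (Bc w z a b choose 3)"
proof -
  assume b: "real b \<le> z"
  have "(\<Sum>p\<in>primes_in w (real b). of_bool (p dvd a) *
     (\<Sum>q\<in>primes_in w (real p). of_bool (q dvd a) *
     (\<Sum>r\<in>primes_in w (real q). (of_bool (r dvd a) :: real))))
    = (\<Sum>p\<in>primes_in w (real b). of_bool (p dvd a) * real (Bc w z a p choose 2))"
    by (intro sum.cong refl arg_cong2[where f="(*)"]) (use b in_lt N2 in \<open>force intro: N2\<close>)
  also have "\<dots> = real (Bc w z a b choose 3)" using lvl[OF b, where a=a and w=w and k=2] by (simp add: numeral_3_eq_3)
  finally show ?thesis .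
qed

lemma T1: fixes a :: nat and w z :: real shows "(\<Sum>p\<in>primes_in w z. ((of_bool (p dvd a) :: real))) = real (card {q\<in>primes_in w z. q dvd a} choose 1)"
  using lvl_top[where a=a and w=w and z=z and k=0] by simp

lemma T2: fixes a :: nat and w z :: real shows "(\<Sum>p\<in>primes_in w z. of_bool (p dvd a) *
     (\<Sum>q\<in>primes_in w (real p). (of_bool (q dvd a) :: real))) = real (card {q\<in>primes_in w z. q dvd a} choose 2)"
proof -
  have "(\<Sum>p\<in>primes_in w z. of_bool (p dvd a) *
     (\<Sum>q\<in>primes_in w (real p). (of_bool (q dvd a) :: real)))
    = (\<Sum>p\<in>primes_in w z. of_bool (p dvd a) * real (Bc w z a p choose 1))"
    by (intro sum.cong refl arg_cong2[where f="(*)"]) (use in_lt N1 in \<open>force intro: N1\<close>)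
  also have "\<dots> = real (card {q\<in>primes_in w z. q dvd a} choose 2)" using lvl_top[where a=a and w=w and z=z and k=1] by (simp add: numeral_2_eq_2)
  finally show ?thesis .
qed

lemma T3: fixes a :: nat and w z :: real shows "(\<Sum>p\<in>primes_in w z. of_bool (p dvd a) *
     (\<Sum>q\<in>primes_in w (real p). of_bool (q dvd a) *
     (\<Sum>r\<in>primes_in w (real q). (of_bool (r dvd a) :: real)))) = real (card {q\<in>primes_in w z. q dvd a} choose 3)"
proof -
  have "(\<Sum>p\<in>primes_in w z. of_bool (p dvd a) *
     (\<Sum>q\<in>primes_in w (real p). of_bool (q dvd a) *
     (\<Sum>r\<in>primes_in w (real q). (of_bool (r dvd a) :: real))))
    = (\<Sum>p\<in>primes_in w z. of_bool (p dvd a) * real (Bc w z a p choose 2))"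
    by (intro sum.cong refl arg_cong2[where f="(*)"]) (use in_lt N2 in \<open>force intro: N2\<close>)
  also have "\<dots> = real (card {q\<in>primes_in w z. q dvd a} choose 3)" using lvl_top[where a=a and w=w and z=z and k=2] by (simp add: numeral_3_eq_3)
  finally show ?thesis .
qed

lemma T4: fixes a :: nat and w z :: real shows "(\<Sum>p\<in>primes_in w z. of_bool (p dvd a) *
     (\<Sum>q\<in>primes_in w (real p). of_bool (q dvd a) *
     (\<Sum>r\<in>primes_in w (real q). of_bool (r dvd a) *
     (\<Sum>s\<in>primes_in w (real r). (of_bool (s dvd a) :: real))))) = real (card {q\<in>primes_in w z. q dvd a} choose 4)"
proof -
  have "(\<Sum>p\<in>primes_in w z. of_bool (p dvd a) *
     (\<Sum>q\<in>primes_in w (real p). of_bool (q dvd a) *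
     (\<Sum>r\<in>primes_in w (real q). of_bool (r dvd a) *
     (\<Sum>s\<in>primes_in w (real r). (of_bool (s dvd a) :: real)))))
    = (\<Sum>p\<in>primes_in w z. of_bool (p dvd a) * real (Bc w z a p choose 3))"
    by (intro sum.cong refl arg_cong2[where f="(*)"]) (use in_lt N3 in \<open>force intro: N3\<close>)
  also have "\<dots> = real (card {q\<in>primes_in w z. q dvd a} choose 4)" using lvl_top[where a=a and w=w and z=z and k=3] by (simp add: numeral_eq_Suc)
  finally show ?thesis .
qed


lemma ch1: "real (n choose 1) = real n" by simp

lemma ch2: "real (n choose 2) = real n * (real n - 1) / 2"
  by (induction n) (simp_all add: numeral_2_eq_2 field_simps)

lemma ch3: "real (n choose 3) = real n * (real n - 1) * (real n - 2) / 6"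
proof (induction n)
  case 0 then show ?case by (simp add: numeral_3_eq_3)
next
  case (Suc n)
  have "Suc n choose 3 = (n choose 2) + (n choose 3)"
    by (simp add: numeral_3_eq_3 numeral_2_eq_2)
  then show ?case using Suc ch2[of n] by (simp add: field_simps)
qed

lemma ch4: "real (n choose 4) = real n * (real n - 1) * (real n - 2) * (real n - 3) / 24"
proof (induction n)
  case 0 then show ?case by (simp add: numeral_eq_Suc)
next
  case (Suc n)
  have "Suc n choose 4 = (n choose 3) + (n choose 4)"
    by (simp add: numeral_eq_Suc)
  then show ?case using Suc ch3[of n] by (simp add: field_simps)
qed

lemma poly:
  fixes m1 m2 m3 m4 :: real
  assumes "m1*m2*m3*m4 \<noteq> 0"
  shows "1 - (M3 m1 m2 m3 m4 - M2 m1 m2 m3 m4 + M1 m1 m2 m3 m4 - 1) / (m1*m2*m3*m4) * real (k choose 1)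
    + 2 * (M2 m1 m2 m3 m4 - 3 * M1 m1 m2 m3 m4 + 7) / (m1*m2*m3*m4) * real (k choose 2)
    - 6 * (M1 m1 m2 m3 m4 - 6) / (m1*m2*m3*m4) * real (k choose 3)
    + 24 / (m1*m2*m3*m4) * real (k choose 4)
    = (m1 - real k) * (m2 - real k) * (m3 - real k) * (m4 - real k) / (m1*m2*m3*m4)"
  using assms unfolding ch1 ch2 ch3 ch4 M1_def M2_def M3_def
  by (simp add: field_simps)

lemma T_pos: "x \<in> Tset \<Longrightarrow> 0 < x"
  unfolding Tset_def by auto

lemma no_between:
  assumes x: "x \<in> Tset" and y: "y \<in> Tset" and d: "y - x \<le> 1" and xn: "x < real n" and ny: "real n < y"
  shows False
proof -
  have xl: "real n - 1 < x" using d ny by linarith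
  from x consider "0 < x \<and> x \<le> 1" | k where "odd k" "3 \<le> k" "real k - 1 \<le> x" "x \<le> real k"
    unfolding Tset_def by auto
  then show False
  proof cases
    case 1
    have "real n < 2" using 1 xl by linarith
    then have "n < 2" by (metis of_nat_less_numeral_iff)
    then have "real n \<le> 1" by simp
    then have "y < 2" using d 1 xn by linarith
    from y consider "0 < y \<and> y \<le> 1" | j where "odd j" "3 \<le> j" "real j - 1 \<le> y" "y \<le> real j"
      unfolding Tset_def by auto
    then show False
    proof cases
      case 1
      have "0 < real n" using \<open>0 < x \<and> x \<le> 1\<close> xn by linarith
      then have "1 \<le> real n" by simp
      then show False using 1 ny by linarith
    next
      case 2
      have "real 3 \<le> real j" using 2 by (simp only: of_nat_le_iff)
      then show False using 2 \<open>y < 2\<close> by simp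
    qed
  next
    case 2
    have "real k < real n + 1" using 2 xn by linarith
    then have "real k < real (n + 1)" by simp
    then have kn1: "k \<le> n" by (simp only: of_nat_less_iff)
    have "real n < real k + 1" using 2 xl by linarith
    then have "real n < real (k + 1)" by simp
    then have "n \<le> k" by (simp only: of_nat_less_iff)
    with kn1 have nk: "n = k" by simp
    have "real 3 \<le> real k" using 2 by (simp only: of_nat_le_iff)
    then have y3: "3 < y" using nk ny by simp
    from y consider "0 < y \<and> y \<le> 1" | j where "odd j" "3 \<le> j" "real j - 1 \<le> y" "y \<le> real j"
      unfolding Tset_def by auto
    then show False
    proof cases
      case 1 then show False using y3 by simp
    next
      case 3: 2
      have "real j < real n + 2" using 3 d xn by linarith
      then have "real j < real (n + 2)" by simp
      then have a1: "j < n + 2" by (simp only: of_nat_less_iff)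
      have "real n < real j" using 3 ny by linarith
      then have a2: "n < j" by (simp only: of_nat_less_iff)
      from a1 a2 have "j = n + 1" by simp
      then show False using 3 2 nk by simp
    qed
  qed
qed

lemma pair:
  assumes "(x1, x2) \<in> Uset"
  shows "0 \<le> (x1 - real n) * (x2 - real n)"
proof (rule ccontr)
  assume "\<not> 0 \<le> (x1 - real n) * (x2 - real n)"
  then have "(x1 < real n \<and> real n < x2) \<or> (x2 < real n \<and> real n < x1)"
    by (auto simp: mult_less_0_iff not_le)
  then show False
    using assms no_between[of x1 x2 n] no_between[of x2 x1 n] unfolding Uset_def by auto
qed


definition Gd :: "real \<Rightarrow> nat \<Rightarrow> bool" where
  "Gd w d = (\<forall>r. prime r \<and> r dvd d \<longrightarrow> w \<le> real r)"

lemma Gd_prime: "prime p \<Longrightarrow> w \<le> real p \<Longrightarrow> Gd w p"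
  unfolding Gd_def using primes_dvd_imp_eq by blast

lemma Gd_mult: "Gd w x \<Longrightarrow> Gd w y \<Longrightarrow> Gd w (x*y)"
  unfolding Gd_def using prime_dvd_mult_iff by blast

lemma primes_inD: "p \<in> primes_in w x \<Longrightarrow> prime p \<and> w \<le> real p \<and> real p < x"
  unfolding primes_in_def by auto

lemma sieve_G:
  assumes "finite A" "d > 0" "Gd w d"
  shows "real (sieveS (Adiv A d) w) = (\<Sum>a\<in>Rset w A. of_bool (d dvd a))"
  using sieve_d[OF assms(1,2)] assms(3) unfolding Gd_def by blast

lemma ltp: "p2 \<in> primes_in w (real p1) \<Longrightarrow> p2 < p1"
  using primes_inD by fastforce


lemma S1:
  assumes "finite A"
  shows "(\<Sum>p1\<in>primes_in w z. real (sieveS (Adiv A p1) w))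
       = (\<Sum>a\<in>Rset w A. real (card {q\<in>primes_in w z. q dvd a} choose 1))"
proof -
  have "(\<Sum>p1\<in>primes_in w z. real (sieveS (Adiv A p1) w))
      = (\<Sum>p1\<in>primes_in w z. \<Sum>a\<in>Rset w A. (of_bool (p1 dvd a) :: real))"
  proof (intro sum.cong refl)
    fix p1 assume "p1 \<in> primes_in w z"
    then have p: "prime p1" "w \<le> real p1" using primes_inD by auto
    show "real (sieveS (Adiv A p1) w) = (\<Sum>a\<in>Rset w A. of_bool (p1 dvd a))"
      using sieve_G[OF assms] p Gd_prime prime_gt_0_nat by blast
  qed
  also have "\<dots> = (\<Sum>a\<in>Rset w A. \<Sum>p1\<in>primes_in w z. (of_bool (p1 dvd a) :: real))"
    by (rule sum.swap)
  also have "\<dots> = (\<Sum>a\<in>Rset w A. real (card {q\<in>primes_in w z. q dvd a} choose 1))"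
    by (intro sum.cong refl) (rule T1)
  finally show ?thesis .
qed

lemma S2:
  assumes "finite A"
  shows "(\<Sum>p1\<in>primes_in w z. \<Sum>p2\<in>primes_in w (real p1). real (sieveS (Adiv A (p1*p2)) w))
       = (\<Sum>a\<in>Rset w A. real (card {q\<in>primes_in w z. q dvd a} choose 2))"
proof -
  have "(\<Sum>p1\<in>primes_in w z. \<Sum>p2\<in>primes_in w (real p1). real (sieveS (Adiv A (p1*p2)) w))
      = (\<Sum>p1\<in>primes_in w z. \<Sum>p2\<in>primes_in w (real p1). \<Sum>a\<in>Rset w A.
           (of_bool (p1 dvd a) * of_bool (p2 dvd a) :: real))"
  proof (intro sum.cong refl)
    fix p1 p2 assume h: "p1 \<in> primes_in w z" "p2 \<in> primes_in w (real p1)"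
    then have p: "prime p1" "w \<le> real p1" "prime p2" "w \<le> real p2" "p2 < p1"
      using primes_inD ltp by auto
    have "Gd w (p1*p2)" using p by (intro Gd_mult Gd_prime)
    moreover have "p1*p2 > 0" using p prime_gt_0_nat by simp
    ultimately have "real (sieveS (Adiv A (p1*p2)) w) = (\<Sum>a\<in>Rset w A. of_bool (p1*p2 dvd a))"
      using sieve_G[OF assms] by blast
    also have "\<dots> = (\<Sum>a\<in>Rset w A. of_bool (p1 dvd a) * of_bool (p2 dvd a))"
      using dvd_prod2[OF p(1) p(3) p(5)] by (simp add: of_bool_conj)
    finally show "real (sieveS (Adiv A (p1*p2)) w) = (\<Sum>a\<in>Rset w A. of_bool (p1 dvd a) * of_bool (p2 dvd a))" .
  qed
  also have "\<dots> = (\<Sum>a\<in>Rset w A. \<Sum>p1\<in>primes_in w z. \<Sum>p2\<in>primes_in w (real p1).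
           (of_bool (p1 dvd a) * of_bool (p2 dvd a) :: real))"
    by (simp only: sum.swap[where B="Rset w A"])
  also have "\<dots> = (\<Sum>a\<in>Rset w A. real (card {q\<in>primes_in w z. q dvd a} choose 2))"
  proof (intro sum.cong refl)
    fix a show "(\<Sum>p1\<in>primes_in w z. \<Sum>p2\<in>primes_in w (real p1).
           (of_bool (p1 dvd a) * of_bool (p2 dvd a) :: real)) = real (card {q\<in>primes_in w z. q dvd a} choose 2)"
      using T2[of a w z] by (simp add: sum_distrib_left)
  qed
  finally show ?thesis .
qed


lemma S3:
  assumes "finite A"
  shows "(\<Sum>p1\<in>primes_in w z. \<Sum>p2\<in>primes_in w (real p1). \<Sum>p3\<in>primes_in w (real p2).
             real (sieveS (Adiv A (p1*p2*p3)) w))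
       = (\<Sum>a\<in>Rset w A. real (card {q\<in>primes_in w z. q dvd a} choose 3))"
proof -
  have "(\<Sum>p1\<in>primes_in w z. \<Sum>p2\<in>primes_in w (real p1). \<Sum>p3\<in>primes_in w (real p2).
             real (sieveS (Adiv A (p1*p2*p3)) w))
      = (\<Sum>p1\<in>primes_in w z. \<Sum>p2\<in>primes_in w (real p1). \<Sum>p3\<in>primes_in w (real p2). \<Sum>a\<in>Rset w A.
           (of_bool (p1 dvd a) * (of_bool (p2 dvd a) * of_bool (p3 dvd a)) :: real))"
  proof (intro sum.cong refl)
    fix p1 p2 p3 assume h: "p1 \<in> primes_in w z" "p2 \<in> primes_in w (real p1)" "p3 \<in> primes_in w (real p2)"
    then have p: "prime p1" "w \<le> real p1" "prime p2" "w \<le> real p2" "p2 < p1"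
       "prime p3" "w \<le> real p3" "p3 < p2"
      using primes_inD ltp by auto
    have "Gd w (p1*p2*p3)" using p by (intro Gd_mult Gd_prime)
    moreover have "p1*p2*p3 > 0" using p prime_gt_0_nat by simp
    ultimately have "real (sieveS (Adiv A (p1*p2*p3)) w) = (\<Sum>a\<in>Rset w A. of_bool (p1*p2*p3 dvd a))"
      using sieve_G[OF assms] by blast
    also have "\<dots> = (\<Sum>a\<in>Rset w A. of_bool (p1 dvd a) * (of_bool (p2 dvd a) * of_bool (p3 dvd a)))"
      using dvd_prod3[OF p(1) p(3) p(6) p(8) p(5)] by (simp add: of_bool_conj)
    finally show "real (sieveS (Adiv A (p1*p2*p3)) w) = (\<Sum>a\<in>Rset w A. of_bool (p1 dvd a) * (of_bool (p2 dvd a) * of_bool (p3 dvd a)))" .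
  qed
  also have "\<dots> = (\<Sum>a\<in>Rset w A. \<Sum>p1\<in>primes_in w z. \<Sum>p2\<in>primes_in w (real p1). \<Sum>p3\<in>primes_in w (real p2).
           (of_bool (p1 dvd a) * (of_bool (p2 dvd a) * of_bool (p3 dvd a)) :: real))"
    by (simp only: sum.swap[where B="Rset w A"])
  also have "\<dots> = (\<Sum>a\<in>Rset w A. real (card {q\<in>primes_in w z. q dvd a} choose 3))"
  proof (intro sum.cong refl)
    fix a show "(\<Sum>p1\<in>primes_in w z. \<Sum>p2\<in>primes_in w (real p1). \<Sum>p3\<in>primes_in w (real p2).
           (of_bool (p1 dvd a) * (of_bool (p2 dvd a) * of_bool (p3 dvd a)) :: real))
         = real (card {q\<in>primes_in w z. q dvd a} choose 3)"
      using T3[of a w z] by (simp add: sum_distrib_left)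
  qed
  finally show ?thesis .
qed

lemma S4:
  assumes "finite A"
  shows "(\<Sum>p1\<in>primes_in w z. \<Sum>p2\<in>primes_in w (real p1). \<Sum>p3\<in>primes_in w (real p2).
             \<Sum>p4\<in>primes_in w (real p3).
             real (sieveS (Adiv A (p1*p2*p3*p4)) w))
       = (\<Sum>a\<in>Rset w A. real (card {q\<in>primes_in w z. q dvd a} choose 4))"
proof -
  have "(\<Sum>p1\<in>primes_in w z. \<Sum>p2\<in>primes_in w (real p1). \<Sum>p3\<in>primes_in w (real p2).
             \<Sum>p4\<in>primes_in w (real p3).
             real (sieveS (Adiv A (p1*p2*p3*p4)) w))
      = (\<Sum>p1\<in>primes_in w z. \<Sum>p2\<in>primes_in w (real p1). \<Sum>p3\<in>primes_in w (real p2).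
           \<Sum>p4\<in>primes_in w (real p3). \<Sum>a\<in>Rset w A.
           (of_bool (p1 dvd a) * (of_bool (p2 dvd a) * (of_bool (p3 dvd a) * of_bool (p4 dvd a))) :: real))"
  proof (intro sum.cong refl)
    fix p1 p2 p3 p4 assume h: "p1 \<in> primes_in w z" "p2 \<in> primes_in w (real p1)" "p3 \<in> primes_in w (real p2)"
      "p4 \<in> primes_in w (real p3)"
    then have p: "prime p1" "w \<le> real p1" "prime p2" "w \<le> real p2" "p2 < p1"
       "prime p3" "w \<le> real p3" "p3 < p2" "prime p4" "w \<le> real p4" "p4 < p3"
      using primes_inD ltp by auto
    have "Gd w (p1*p2*p3*p4)" using p by (intro Gd_mult Gd_prime)
    moreover have "p1*p2*p3*p4 > 0" using p prime_gt_0_nat by simp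
    ultimately have "real (sieveS (Adiv A (p1*p2*p3*p4)) w) = (\<Sum>a\<in>Rset w A. of_bool (p1*p2*p3*p4 dvd a))"
      using sieve_G[OF assms] by blast
    also have "\<dots> = (\<Sum>a\<in>Rset w A. of_bool (p1 dvd a) * (of_bool (p2 dvd a) * (of_bool (p3 dvd a) * of_bool (p4 dvd a))))"
      using dvd_prod4[OF p(1) p(3) p(6) p(9) p(11) p(8) p(5)] by (simp add: of_bool_conj)
    finally show "real (sieveS (Adiv A (p1*p2*p3*p4)) w) = (\<Sum>a\<in>Rset w A. of_bool (p1 dvd a) * (of_bool (p2 dvd a) * (of_bool (p3 dvd a) * of_bool (p4 dvd a))))" .
  qed
  also have "\<dots> = (\<Sum>a\<in>Rset w A. \<Sum>p1\<in>primes_in w z. \<Sum>p2\<in>primes_in w (real p1). \<Sum>p3\<in>primes_in w (real p2).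
           \<Sum>p4\<in>primes_in w (real p3).
           (of_bool (p1 dvd a) * (of_bool (p2 dvd a) * (of_bool (p3 dvd a) * of_bool (p4 dvd a))) :: real))"
    by (simp only: sum.swap[where B="Rset w A"])
  also have "\<dots> = (\<Sum>a\<in>Rset w A. real (card {q\<in>primes_in w z. q dvd a} choose 4))"
  proof (intro sum.cong refl)
    fix a show "(\<Sum>p1\<in>primes_in w z. \<Sum>p2\<in>primes_in w (real p1). \<Sum>p3\<in>primes_in w (real p2).
           \<Sum>p4\<in>primes_in w (real p3).
           (of_bool (p1 dvd a) * (of_bool (p2 dvd a) * (of_bool (p3 dvd a) * of_bool (p4 dvd a))) :: real))
         = real (card {q\<in>primes_in w z. q dvd a} choose 4)"
      using T4[of a w z] by (simp add: sum_distrib_left)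
  qed
  finally show ?thesis .
qed


lemma S0:
  assumes "finite A" "w \<le> z"
  shows "real (sieveS A z) = (\<Sum>a\<in>Rset w A. (of_bool (card {q\<in>primes_in w z. q dvd a} = 0) :: real))"
proof -
  have fR: "finite (Rset w A)" using assms(1) unfolding Rset_def by auto
  have e: "{a \<in> A. \<forall>p. prime p \<and> p dvd a \<longrightarrow> \<not> real p < z}
      = {a\<in>Rset w A. card {q\<in>primes_in w z. q dvd a} = 0}"
  proof -
    have fin: "\<And>a. finite {q\<in>primes_in w z. q dvd a}" using finite_primes_in by auto
    show ?thesis
      unfolding Rset_def primes_in_def using assms(2) fin[unfolded primes_in_def]
      by (auto simp: card_eq_0_iff)
  qed
  have "real (sieveS A z) = (\<Sum>a\<in>{a\<in>Rset w A. card {q\<in>primes_in w z. q dvd a} = 0}. 1)"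
    unfolding sieveS_def e by simp
  also have "\<dots> = (\<Sum>a\<in>Rset w A. (of_bool (card {q\<in>primes_in w z. q dvd a} = 0) :: real))"
    by (subst sum.inter_filter[OF fR]) (intro sum.cong, auto)
  finally show ?thesis .
qed

theorem theorem3:
  fixes A :: "nat set" and w z m1 m2 m3 m4 :: real
  assumes "finite A" and "0 \<notin> A" and "w \<le> z"
    and "(m1, m2) \<in> Uset" and "(m3, m4) \<in> Uset"
  shows "real (sieveS A z) \<le>
      real (sieveS A w)
    - (M3 m1 m2 m3 m4 - M2 m1 m2 m3 m4 + M1 m1 m2 m3 m4 - 1) / (m1*m2*m3*m4)
        * (\<Sum>p1\<in>primes_in w z. real (sieveS (Adiv A p1) w))
    + 2 * (M2 m1 m2 m3 m4 - 3 * M1 m1 m2 m3 m4 + 7) / (m1*m2*m3*m4)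
        * (\<Sum>p1\<in>primes_in w z. \<Sum>p2\<in>primes_in w (real p1).
             real (sieveS (Adiv A (p1*p2)) w))
    - 6 * (M1 m1 m2 m3 m4 - 6) / (m1*m2*m3*m4)
        * (\<Sum>p1\<in>primes_in w z. \<Sum>p2\<in>primes_in w (real p1). \<Sum>p3\<in>primes_in w (real p2).
             real (sieveS (Adiv A (p1*p2*p3)) w))
    + 24 / (m1*m2*m3*m4)
        * (\<Sum>p1\<in>primes_in w z. \<Sum>p2\<in>primes_in w (real p1). \<Sum>p3\<in>primes_in w (real p2).
             \<Sum>p4\<in>primes_in w (real p3).
             real (sieveS (Adiv A (p1*p2*p3*p4)) w))"
proof -
  define X1 where "X1 = (M3 m1 m2 m3 m4 - M2 m1 m2 m3 m4 + M1 m1 m2 m3 m4 - 1) / (m1*m2*m3*m4)"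
  define X2 where "X2 = 2 * (M2 m1 m2 m3 m4 - 3 * M1 m1 m2 m3 m4 + 7) / (m1*m2*m3*m4)"
  define X3 where "X3 = 6 * (M1 m1 m2 m3 m4 - 6) / (m1*m2*m3*m4)"
  define X4 where "X4 = 24 / (m1*m2*m3*m4)"
  define n where "n a = card {q\<in>primes_in w z. q dvd a}" for a
  have pos: "0 < m1" "0 < m2" "0 < m3" "0 < m4"
    using assms(4,5) T_pos unfolding Uset_def by auto
  then have P: "0 < m1*m2*m3*m4" by simp
  have key: "(of_bool (k = 0) :: real) \<le> 1 - X1 * real (k choose 1) + X2 * real (k choose 2)
      - X3 * real (k choose 3) + X4 * real (k choose 4)" for k
  proof -
    have eq: "1 - X1 * real (k choose 1) + X2 * real (k choose 2)
      - X3 * real (k choose 3) + X4 * real (k choose 4)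
      = (m1 - real k) * (m2 - real k) * (m3 - real k) * (m4 - real k) / (m1*m2*m3*m4)"
      unfolding X1_def X2_def X3_def X4_def by (rule poly) (use P in auto)
    show ?thesis
    proof (cases "k = 0")
      case True
      then show ?thesis using eq P pos by simp
    next
      case False
      have "0 \<le> (m1 - real k) * (m2 - real k)" using pair assms(4) by blast
      moreover have "0 \<le> (m3 - real k) * (m4 - real k)" using pair assms(5) by blast
      ultimately have "0 \<le> (m1 - real k) * (m2 - real k) * ((m3 - real k) * (m4 - real k))"
        by simp
      then have "0 \<le> (m1 - real k) * (m2 - real k) * (m3 - real k) * (m4 - real k) / (m1*m2*m3*m4)"
        using P by (simp add: mult.assoc)
      then show ?thesis using eq False by simp
    qed
  qed
  have Sw: "real (sieveS A w) = (\<Sum>a\<in>Rset w A. 1)"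
    unfolding sieveS_def Rset_def by simp
  have "real (sieveS A z) = (\<Sum>a\<in>Rset w A. (of_bool (n a = 0) :: real))"
    using S0[OF assms(1,3)] unfolding n_def .
  also have "\<dots> \<le> (\<Sum>a\<in>Rset w A. 1 - X1 * real (n a choose 1) + X2 * real (n a choose 2)
      - X3 * real (n a choose 3) + X4 * real (n a choose 4))"
    by (intro sum_mono key)
  also have "\<dots> = (\<Sum>a\<in>Rset w A. 1) - X1 * (\<Sum>a\<in>Rset w A. real (n a choose 1))
      + X2 * (\<Sum>a\<in>Rset w A. real (n a choose 2)) - X3 * (\<Sum>a\<in>Rset w A. real (n a choose 3))
      + X4 * (\<Sum>a\<in>Rset w A. real (n a choose 4))"
    by (simp add: sum.distrib sum_subtractf sum_distrib_left)
  finally show ?thesis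
    unfolding Sw S1[OF assms(1)] S2[OF assms(1)] S3[OF assms(1)] S4[OF assms(1)]
    unfolding X1_def X2_def X3_def X4_def n_def .
qed

end
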